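(* Let $(a_n)_{n\geq 0}$ be a primary pseudo-polynomial and $f=\sum_{n\ge0}a_nx^n$ its generating series. Then for every positive integer $n$, the integer $\det H_n(f)$ is divisible by $$\prod_{\substack{p\le n-1\\ p \text{ prime}}} p^{\,n-p}.$$
   Context: A sequence of integers $(a_n)_{n\ge0}$ is a primary pseudo-polynomial if $a_{n+p}\equiv a_n \pmod p$ for every integer $n\ge 0$ and every prime $p$. For $n\ge1$, the $n$-th Hankel matrix of $f$ is $H_n(f)=(a_{i+j-2})_{1\le i,j\le n}$. *)

theory Defs
  imports "HOL-Computational_Algebra.Primes" "Jordan_Normal_Form.Determinant"
begin

definition primary_pseudo_polynomial :: "(nat \<Rightarrow> int) \<Rightarrow> bool" where
  "primary_pseudo_polynomial a \<longleftrightarrow>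
     (\<forall>n p. prime p \<longrightarrow> a (n + p) mod int p = a n mod int p)"

text \<open>The n-th Hankel matrix H_n(f) = (a_{i+j-2})_{1<=i,j<=n}; with 0-based indices i,j<n
  the entry is a (i + j).\<close>
definition hankel :: "(nat \<Rightarrow> int) \<Rightarrow> nat \<Rightarrow> int mat" where
  "hankel a n = mat n n (\<lambda>(i, j). a (i + j))"

end

theory Submission
  imports Defs
begin

lemma prime_part:
  fixes a :: "nat \<Rightarrow> int" and n p :: nat
  assumes pp: "primary_pseudo_polynomial a" and p: "prime p" and pn: "p < n"
  shows "int p ^ (n - p) dvd det (hankel a n)"
proof -
  define E :: "int mat" where "E = mat n n (\<lambda>(k,i). (if i = k then 1 else 0) - (if p \<le> k \<and> i = k - p then 1 else 0))"
  define D :: "int mat" where "D = mat n n (\<lambda>(k,i). if i = k then (if p \<le> k then int p else 1) else 0)"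
  define M :: "int mat" where "M = mat n n (\<lambda>(k,j). if p \<le> k then (a (k+j) - a (k-p+j)) div int p else a (k+j))"
  have p0: "p > 0" using p prime_gt_0_nat by blast
  have dv: "int p dvd a (k+j) - a (k-p+j)" if "p \<le> k" for k j
  proof -
    have "a (k-p+j + p) mod int p = a (k-p+j) mod int p" using pp p unfolding primary_pseudo_polynomial_def by blast
    moreover have "k-p+j+p = k+j" using that by simp
    ultimately show ?thesis by (metis mod_eq_dvd_iff)
  qed
  have eq: "E * hankel a n = D * M"
  proof (rule eq_matI)
    fix k j assume k: "k < dim_row (D * M)" and j: "j < dim_col (D * M)"
    hence kn: "k < n" and jn: "j < n" by (auto simp: D_def M_def)
    have "(E * hankel a n) $$ (k,j) = (\<Sum>i<n. ((if i = k then 1 else 0) - (if p \<le> k \<and> i = k - p then 1 else 0)) * a (i + j))"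
      using kn jn by (simp add: E_def hankel_def scalar_prod_def lessThan_atLeast0)
    also have "\<dots> = (\<Sum>i<n. (if i = k then a (i+j) else 0) - (if p \<le> k \<and> i = k - p then a (i+j) else 0))"
    proof (rule sum.cong[OF refl])
      fix i
      have "p \<le> k \<and> i = k - p \<Longrightarrow> i \<noteq> k" using p0 by linarith
      thus "((if i = k then 1 else 0) - (if p \<le> k \<and> i = k - p then 1 else 0)) * a (i + j) =
        (if i = k then a (i+j) else 0) - (if p \<le> k \<and> i = k - p then a (i+j) else 0)"
        by (cases "i = k"; cases "p \<le> k \<and> i = k - p") auto
    qed
    also have "\<dots> = (\<Sum>i<n. (if i = k then a (i+j) else 0)) - (\<Sum>i<n. (if p \<le> k \<and> i = k - p then a (i+j) else 0))"
      by (rule sum_subtractf)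
    also have "\<dots> = a (k+j) - (if p \<le> k then a (k-p+j) else 0)"
      using kn by (auto simp: sum.delta)
    finally have L: "(E * hankel a n) $$ (k,j) = a (k+j) - (if p \<le> k then a (k-p+j) else 0)" .
    have "(D * M) $$ (k,j) = (\<Sum>i<n. (if i = k then (if p \<le> k then int p else 1) else 0) * M $$ (i,j))"
      using kn jn by (simp add: D_def M_def scalar_prod_def lessThan_atLeast0)
    also have "\<dots> = (\<Sum>i<n. (if i = k then (if p \<le> k then int p else 1) * M $$ (i,j) else 0))"
      by (rule sum.cong) auto
    also have "\<dots> = (if p \<le> k then int p else 1) * M $$ (k,j)"
      using kn by (simp add: sum.delta)
    also have "\<dots> = a (k+j) - (if p \<le> k then a (k-p+j) else 0)"
      using kn jn dv[of k j] by (simp add: M_def)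
    finally show "(E * hankel a n) $$ (k,j) = (D * M) $$ (k,j)" using L by simp
  qed (auto simp: E_def D_def M_def hankel_def)
  have Ec: "E \<in> carrier_mat n n" and Dc: "D \<in> carrier_mat n n" and Mc: "M \<in> carrier_mat n n"
    and Hc: "hankel a n \<in> carrier_mat n n" by (auto simp: E_def D_def M_def hankel_def)
  have dE: "det E = 1"
  proof -
    have "det E = prod_list (diag_mat E)"
      by (rule det_lower_triangular[OF _ Ec]) (auto simp: E_def)
    also have "diag_mat E = replicate n 1"
      by (rule nth_equalityI) (use p0 in \<open>auto simp: diag_mat_def E_def\<close>)
    finally show ?thesis by simp
  qed
  have dD: "det D = int p ^ (n - p)"
  proof -
    have "det D = prod_list (diag_mat D)"
      by (rule det_lower_triangular[OF _ Dc]) (auto simp: D_def)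
    also have "diag_mat D = replicate p 1 @ replicate (n - p) (int p)"
      by (rule nth_equalityI) (use pn in \<open>auto simp: diag_mat_def D_def nth_append\<close>)
    finally show ?thesis by simp
  qed
  have "det (hankel a n) = det D * det M"
    using det_mult[OF Ec Hc] det_mult[OF Dc Mc] eq dE by simp
  thus ?thesis using dD by simp
qed

theorem lemma2:
  fixes a :: "nat \<Rightarrow> int" and n :: nat
  assumes "primary_pseudo_polynomial a" and "n \<ge> 1"
  shows "(\<Prod>p\<in>{p. prime p \<and> p \<le> n - 1}. int p ^ (n - p)) dvd det (hankel a n)"
proof -
  have gen: "\<And>S. finite S \<Longrightarrow> S \<subseteq> {p. prime p \<and> p \<le> n - 1} \<Longrightarrow>
      (\<Prod>p\<in>S. int p ^ (n - p)) dvd det (hankel a n)"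
  proof -
    fix S :: "nat set" assume "finite S" "S \<subseteq> {p. prime p \<and> p \<le> n - 1}"
    thus "(\<Prod>p\<in>S. int p ^ (n - p)) dvd det (hankel a n)"
    proof (induction S rule: finite_induct)
      case empty thus ?case by simp
    next
      case (insert q S)
      have q: "prime q" "q < n" using insert.prems assms(2) by auto
      have cop: "coprime (int q ^ (n - q)) (\<Prod>p\<in>S. int p ^ (n - p))"
      proof -
        have "coprime (int q) (\<Prod>p\<in>S. int p ^ (n - p))"
        proof (rule prod_coprime_right)
        fix r assume r: "r \<in> S"
        hence "prime r" "r \<noteq> q" using insert by auto
        hence "coprime (int q) (int r)" using q by (simp add: primes_coprime)
        thus "coprime (int q) (int r ^ (n - r))" by simp
        qed
        thus ?thesis by simp
      qed
      have "int q ^ (n - q) * (\<Prod>p\<in>S. int p ^ (n - p)) dvd det (hankel a n)"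
        using divides_mult[OF prime_part[OF assms(1) q] insert.IH] cop insert.prems by auto
      thus ?case using insert by simp
    qed
  qed
  show ?thesis by (rule gen) auto
qed

end
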